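(* Let $N>4$ and $V\in C(\mathbb{R}^N,\mathbb{R})\cap L^\infty(\mathbb{R}^N,\mathbb{R})\cap L^s(\mathbb{R}^N,\mathbb{R})$ for some $1<s<N/2$. Then $$\lim_{\mu+|\xi|\to+\infty}\int_{\mathbb{R}^N}V(x)|z_{\mu,\xi}(x)|^2dx=0,$$ where the limit is over $\mu>0$, $\xi\in\mathbb{R}^N$.
   Context: $\kappa_N=(N(N-2))^{(N-2)/4}$ and $z_{\mu,\xi}(x)=\kappa_N\mu^{(N-2)/2}(\mu^2+|x-\xi|^2)^{-(N-2)/2}$ for $\mu>0$, $\xi\in\mathbb{R}^N$. *)

theory Defs
  imports "HOL-Analysis.Analysis"
begin

text \<open>Dimension N of the ambient Euclidean space 'a is DIM('a).\<close>

definition kappaN :: "nat \<Rightarrow> real" where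
  "kappaN N = (real N * (real N - 2)) powr ((real N - 2) / 4)"

definition bubble :: "real \<Rightarrow> 'a::euclidean_space \<Rightarrow> 'a \<Rightarrow> real" where
  "bubble \<mu> \<xi> x = kappaN DIM('a) * \<mu> powr ((real DIM('a) - 2) / 2)
      * (\<mu>\<^sup>2 + (norm (x - \<xi>))\<^sup>2) powr (- (real DIM('a) - 2) / 2)"

end

theory Submission
  imports Defs
begin

lemma nn_integral_scale:
  fixes f :: "'a::euclidean_space \<Rightarrow> ennreal" and t :: 'a
  assumes [measurable]: "f \<in> borel_measurable borel" and c: "c > 0"
  shows "(\<integral>\<^sup>+x. f x \<partial>lborel) = ennreal (c ^ DIM('a)) * (\<integral>\<^sup>+y. f (t + c *\<^sub>R y) \<partial>lborel)"
  apply (subst lborel_affine[of c t])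
  using c by (simp_all add: nn_integral_density nn_integral_distr nn_integral_cmult)

lemma oneD_fin:
  fixes q :: real assumes q: "q > 1/2"
  shows "(\<integral>\<^sup>+t. ennreal ((1 + t\<^sup>2) powr (-q)) \<partial>lborel) < \<infinity>"
proof -
  define e where "e = -2*q"
  have e: "e < -1" using q by (simp add: e_def)
  have hi: "((\<lambda>x. x powr e) has_integral -((1::real) powr (e+1)) / (e+1)) {1..}"
    using has_integral_powr_to_inf[OF e, of 1] by simp
  define g where "g = (\<lambda>t::real. indicator {1..} t * t powr e)"
  have gm[measurable]: "g \<in> borel_measurable borel" unfolding g_def by measurable
  have g0: "\<And>t. g t \<ge> 0" unfolding g_def by (simp add: indicator_def)
  have "(g has_integral -((1::real) powr (e+1)) / (e+1)) UNIV"
  proof -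
    have "g = (\<lambda>x. if x \<in> {1..} then x powr e else 0)"
      by (auto simp: g_def indicator_def fun_eq_iff)
    then show ?thesis using hi has_integral_restrict_UNIV by metis
  qed
  then have gi: "(\<integral>\<^sup>+t. ennreal (g t) \<partial>lborel) = ennreal (-((1::real) powr (e+1)) / (e+1))"
    by (intro nn_integral_has_integral_lborel gm g0)
  have gi2: "(\<integral>\<^sup>+t. ennreal (g (-t)) \<partial>lborel) = (\<integral>\<^sup>+t. ennreal (g t) \<partial>lborel)"
    using nn_integral_real_affine[of "\<lambda>t. ennreal (g t)" "-1" 0] by simp
  have bound: "ennreal ((1 + t\<^sup>2) powr (-q)) \<le> indicator {-1..1} t + ennreal (g t) + ennreal (g (-t))" for t
  proof -
    have A: "(1 + t\<^sup>2) powr (-q) \<le> (t\<^sup>2) powr (-q)" if "t \<noteq> 0"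
      using that q by (intro powr_mono2') auto
    have B: "(t\<^sup>2) powr (-q) = \<bar>t\<bar> powr e" if "t \<noteq> 0"
    proof -
      have h: "\<bar>t\<bar> powr (2::real) = t\<^sup>2" using that by (simp add: powr_numeral)
      have "\<bar>t\<bar> powr e = (\<bar>t\<bar> powr 2) powr (-q)" by (simp only: powr_powr) (simp add: e_def)
      then show ?thesis using h by simp
    qed
    show ?thesis
    proof (cases "\<bar>t\<bar> \<le> 1")
      case True
      have "(1 + t\<^sup>2) powr (-q) \<le> 1" 
      proof -
        have p: "1 + t\<^sup>2 \<noteq> 0" by (metis add_pos_nonneg zero_le_power2 zero_less_one less_irrefl)
        show ?thesis using q powr_mono[of "-q" 0 "1+t\<^sup>2"] p by simp
      qed
      then have "ennreal ((1 + t\<^sup>2) powr (-q)) \<le> indicator {-1..1} t" using True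
        by (simp add: indicator_def abs_le_iff)
      also have "\<dots> \<le> indicator {-1..1} t + ennreal (g t) + ennreal (g (-t))" by simp
      finally show ?thesis .
    next
      case False
      then have t0: "t \<noteq> 0" by auto
      have "(1 + t\<^sup>2) powr (-q) \<le> g t + g (-t)"
      proof (cases "t \<ge> 1")
        case True
        then show ?thesis using A[OF t0] B[OF t0] by (simp add: g_def indicator_def)
      next
        case f2: False
        then have "-t \<ge> 1" using False by auto
        then show ?thesis using A[OF t0] B[OF t0] f2 by (simp add: g_def indicator_def)
      qed
      then have "ennreal ((1 + t\<^sup>2) powr (-q)) \<le> ennreal (g t) + ennreal (g (-t))"
        using g0 by (simp add: ennreal_plus[symmetric] del: ennreal_plus)
      also have "\<dots> \<le> indicator {-1..1} t + ennreal (g t) + ennreal (g (-t))" by simp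
      finally show ?thesis .
    qed
  qed
  have s1: "(\<integral>\<^sup>+t. indicator {-1..1} t + ennreal (g t) + ennreal (g (-t)) \<partial>lborel) = (\<integral>\<^sup>+t. indicator {-1..1} t + ennreal (g t) \<partial>lborel) + (\<integral>\<^sup>+t. ennreal (g (-t)) \<partial>lborel)"
    by (rule nn_integral_add) auto
  have s2: "(\<integral>\<^sup>+t. indicator {-1..1} t + ennreal (g t) \<partial>lborel) = (\<integral>\<^sup>+t. indicator {-1..1::real} t \<partial>lborel) + (\<integral>\<^sup>+t. ennreal (g t) \<partial>lborel)"
    by (rule nn_integral_add) auto
  have s3: "(\<integral>\<^sup>+t. indicator {-1..1::real} t \<partial>lborel) = ennreal 2"
    using emeasure_lborel_Icc[of "-1::real" 1] by simp
  have "(\<integral>\<^sup>+t. ennreal ((1 + t\<^sup>2) powr (-q)) \<partial>lborel) \<le>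
     (\<integral>\<^sup>+t. indicator {-1..1} t + ennreal (g t) + ennreal (g (-t)) \<partial>lborel)"
    by (intro nn_integral_mono bound)
  also have "\<dots> < \<infinity>"
    unfolding s1 s2 s3 gi2 gi by (simp del: ennreal_plus)
  finally show ?thesis .
qed

lemma nD_fin:
  fixes p :: real assumes p: "p > real DIM('a) / 2"
  shows "(\<integral>\<^sup>+(y::'a::euclidean_space). ennreal ((1 + (norm y)\<^sup>2) powr (-p)) \<partial>lborel) < \<infinity>"
proof -
  define N where "N = DIM('a)"
  have N0: "real N > 0" by (simp add: N_def)
  define q where "q = p / real N"
  have q: "q > 1/2" using p N0 by (simp add: q_def N_def field_simps)
  have pt: "ennreal ((1 + (norm y)\<^sup>2) powr (-p)) \<le> (\<Prod>b\<in>Basis. ennreal ((1 + (y \<bullet> b)\<^sup>2) powr (-q)))" for y :: 'a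
  proof -
    have pos: "1 + (norm y)\<^sup>2 > 0" by (simp add: add_pos_nonneg)
    have "(1 + (norm y)\<^sup>2) powr (-p) = ((1 + (norm y)\<^sup>2) powr (-q)) powr real N"
      using N0 by (simp add: powr_powr q_def)
    also have "\<dots> = ((1 + (norm y)\<^sup>2) powr (-q)) ^ N"
      using pos by (simp add: powr_realpow)
    also have "\<dots> = (\<Prod>b\<in>(Basis::'a set). (1 + (norm y)\<^sup>2) powr (-q))"
      by (simp add: N_def)
    also have "\<dots> \<le> (\<Prod>b\<in>(Basis::'a set). (1 + (y \<bullet> b)\<^sup>2) powr (-q))"
    proof (rule prod_mono)
      fix b :: 'a assume b: "b \<in> Basis"
      have "\<bar>y \<bullet> b\<bar> \<le> norm y" using Basis_le_norm[OF b] by simp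
      then have "(y \<bullet> b)\<^sup>2 \<le> (norm y)\<^sup>2"
        by (metis abs_ge_zero power2_abs power_mono)
      then show "0 \<le> (1 + (norm y)\<^sup>2) powr (-q) \<and> (1 + (norm y)\<^sup>2) powr (-q) \<le> (1 + (y \<bullet> b)\<^sup>2) powr (-q)"
        using q by (auto intro!: powr_mono2' simp: add_pos_nonneg)
    qed
    finally have "(1 + (norm y)\<^sup>2) powr (-p) \<le> (\<Prod>b\<in>(Basis::'a set). (1 + (y \<bullet> b)\<^sup>2) powr (-q))" .
    then show ?thesis by (subst prod_ennreal) (auto intro!: ennreal_leI)
  qed
  have "(\<integral>\<^sup>+(y::'a). ennreal ((1 + (norm y)\<^sup>2) powr (-p)) \<partial>lborel) \<le>
        (\<integral>\<^sup>+(y::'a). (\<Prod>b\<in>Basis. ennreal ((1 + (y \<bullet> b)\<^sup>2) powr (-q))) \<partial>lborel)"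
    by (intro nn_integral_mono pt)
  also have "\<dots> = (\<Prod>b\<in>(Basis::'a set). (\<integral>\<^sup>+t. ennreal ((1 + t\<^sup>2) powr (-q)) \<partial>lborel))"
    by (rule nn_integral_lborel_prod[where f="\<lambda>b t. ennreal ((1 + t\<^sup>2) powr (-q))"]) auto
  also have "\<dots> < \<infinity>"
    using oneD_fin[OF q] by (simp add: power_less_top_ennreal)
  finally show ?thesis .
qed

lemma young_pt:
  fixes a b t s :: real
  assumes a: "a \<ge> 0" and b: "b \<ge> 0" and t: "t > 0" and s: "s > 1"
  shows "a * b \<le> (t * a) powr s + (b / t) powr (s / (s - 1))"
proof -
  define A where "A = t * a"
  define B where "B = b / t"
  have A0: "A \<ge> 0" and B0: "B \<ge> 0" using a b t by (auto simp: A_def B_def)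
  have ab: "a * b = A * B" using t by (simp add: A_def B_def)
  have P1: "0 \<le> A powr s" "0 \<le> B powr (s / (s - 1))" by auto
  show ?thesis
  proof (cases "B \<le> A powr (s - 1)")
    case True
    have "A * B \<le> A * A powr (s - 1)" using True A0 by (simp add: mult_left_mono)
    also have "\<dots> = A powr s"
    proof (cases "A = 0")
      case True then show ?thesis using s by simp
    next
      case False
      then show ?thesis using powr_add[of A 1 "s-1"] A0 by simp
    qed
    finally show ?thesis using ab P1 unfolding A_def B_def by linarith
  next
    case False
    then have Bp: "B > 0" using A0 by (smt (verit) powr_ge_zero)
    have "A = (A powr (s - 1)) powr (1 / (s - 1))" using s A0 by (simp add: powr_powr)
    also have "\<dots> \<le> B powr (1 / (s - 1))" using False s by (intro powr_mono2) auto
    finally have "A * B \<le> B powr (1 / (s - 1)) * B" using Bp by (simp add: mult_right_mono)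
    also have "\<dots> = B powr (s / (s - 1))"
    proof -
      have "1 / (s - 1) + 1 = s / (s - 1)" using s by (simp add: field_simps)
      then show ?thesis using powr_add[of B "1 / (s - 1)" 1] Bp by simp
    qed
    finally show ?thesis using ab P1 unfolding A_def B_def by linarith
  qed
qed

lemma sq_powr:
  fixes x a :: real assumes x: "x > 0"
  shows "(x\<^sup>2) powr a = x powr (2 * a)"
proof -
  have "(x powr 2) powr a = x powr (2 * a)" by (rule powr_powr)
  moreover have "x powr 2 = x\<^sup>2" using x by (simp add: powr_numeral)
  ultimately show ?thesis by simp
qed

lemma bubble_sq:
  fixes \<xi> x :: "'a::euclidean_space"
  assumes mu: "\<mu> > 0"
  shows "(bubble \<mu> \<xi> x)\<^sup>2 = (kappaN DIM('a))\<^sup>2 * \<mu> powr (real DIM('a) - 2)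
           * (\<mu>\<^sup>2 + (norm (x - \<xi>))\<^sup>2) powr (-(real DIM('a) - 2))"
proof -
  define n where "n = real DIM('a)"
  define D where "D = \<mu>\<^sup>2 + (norm (x - \<xi>))\<^sup>2"
  have D: "D > 0" using mu by (simp add: D_def add_pos_nonneg)
  have sq: "(y powr a)\<^sup>2 = y powr (2 * a)" if "y > 0" for y a :: real
    using that by (simp add: power2_eq_square powr_add[symmetric])
  have "(bubble \<mu> \<xi> x)\<^sup>2 = (kappaN DIM('a))\<^sup>2 * (\<mu> powr ((n - 2) / 2))\<^sup>2 * (D powr (- (n - 2) / 2))\<^sup>2"
    unfolding bubble_def n_def D_def by (simp add: power_mult_distrib)
  also have "\<dots> = (kappaN DIM('a))\<^sup>2 * \<mu> powr (n - 2) * D powr (-(n - 2))"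
  proof -
    have e1: "2 * ((n - 2) / 2) = n - 2" by simp
    have e2: "2 * (- (n - 2) / 2) = -(n - 2)" by simp
    have "(\<mu> powr ((n - 2) / 2))\<^sup>2 = \<mu> powr (n - 2)" by (simp only: sq[OF mu] e1)
    moreover have "(D powr (- (n - 2) / 2))\<^sup>2 = D powr (-(n - 2))" by (simp only: sq[OF D] e2)
    ultimately show ?thesis by simp
  qed
  finally show ?thesis unfolding n_def D_def .
qed

lemma bubble_sq_scaled:
  fixes \<xi> y :: "'a::euclidean_space"
  assumes mu: "\<mu> > 0"
  shows "(bubble \<mu> \<xi> (\<xi> + \<mu> *\<^sub>R y))\<^sup>2 = (kappaN DIM('a))\<^sup>2 * \<mu> powr (-(real DIM('a) - 2))
           * (1 + (norm y)\<^sup>2) powr (-(real DIM('a) - 2))"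
proof -
  define n where "n = real DIM('a)"
  have e: "\<mu>\<^sup>2 + (norm (\<xi> + \<mu> *\<^sub>R y - \<xi>))\<^sup>2 = \<mu>\<^sup>2 * (1 + (norm y)\<^sup>2)"
    using mu by (simp add: power_mult_distrib algebra_simps)
  have p: "1 + (norm y)\<^sup>2 > 0" by (simp add: add_pos_nonneg)
  have "(\<mu>\<^sup>2 * (1 + (norm y)\<^sup>2)) powr (-(n - 2)) = (\<mu>\<^sup>2) powr (-(n-2)) * (1 + (norm y)\<^sup>2) powr (-(n - 2))"
    using mu p by (simp add: powr_mult)
  also have "(\<mu>\<^sup>2) powr (-(n-2)) = \<mu> powr (2 * -(n-2))"
    using mu by (rule sq_powr)
  finally have A: "(\<mu>\<^sup>2 * (1 + (norm y)\<^sup>2)) powr (-(n - 2)) = \<mu> powr (2 * -(n-2)) * (1 + (norm y)\<^sup>2) powr (-(n - 2))" .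
  have B: "\<mu> powr (n - 2) * \<mu> powr (2 * -(n-2)) = \<mu> powr (-(n-2))"
  proof -
    have "(n-2) + 2 * -(n-2) = -(n-2)" by simp
    then show ?thesis using powr_add[of \<mu> "n-2" "2 * -(n-2)"] by simp
  qed
  show ?thesis
    unfolding bubble_sq[OF mu] e n_def[symmetric] A
    using B by (simp add: mult.assoc)
qed

lemma Zpow:
  fixes \<xi> :: "'a::euclidean_space"
  assumes mu: "\<mu> > 0" and r: "r > 0"
  shows "(\<integral>\<^sup>+x. ennreal (((bubble \<mu> \<xi> x)\<^sup>2) powr r) \<partial>lborel) =
    ennreal (((kappaN DIM('a))\<^sup>2) powr r * \<mu> powr (real DIM('a) - (real DIM('a) - 2) * r)) *
    (\<integral>\<^sup>+(y::'a). ennreal ((1 + (norm y)\<^sup>2) powr (-(real DIM('a) - 2) * r)) \<partial>lborel)"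
proof -
  define n where "n = real DIM('a)"
  define k2 where "k2 = (kappaN DIM('a))\<^sup>2"
  have k2: "k2 \<ge> 0" by (simp add: k2_def)
  have meas[measurable]: "(\<lambda>x. ennreal (((bubble \<mu> \<xi> x)\<^sup>2) powr r)) \<in> borel_measurable borel"
    unfolding bubble_def by measurable
  have pt: "((bubble \<mu> \<xi> (\<xi> + \<mu> *\<^sub>R y))\<^sup>2) powr r = k2 powr r * \<mu> powr (-(n-2) * r) * (1 + (norm y)\<^sup>2) powr (-(n - 2) * r)" for y :: 'a
  proof -
    have p: "1 + (norm y)\<^sup>2 > 0" by (simp add: add_pos_nonneg)
    show ?thesis
      unfolding bubble_sq_scaled[OF mu] n_def[symmetric] k2_def[symmetric]
      using mu p k2 by (simp add: powr_mult powr_powr)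
  qed
  have "(\<integral>\<^sup>+x. ennreal (((bubble \<mu> \<xi> x)\<^sup>2) powr r) \<partial>lborel) =
     ennreal (\<mu> ^ DIM('a)) * (\<integral>\<^sup>+y. ennreal (((bubble \<mu> \<xi> (\<xi> + \<mu> *\<^sub>R y))\<^sup>2) powr r) \<partial>lborel)"
    by (rule nn_integral_scale[OF meas mu])
  also have "(\<integral>\<^sup>+y. ennreal (((bubble \<mu> \<xi> (\<xi> + \<mu> *\<^sub>R y))\<^sup>2) powr r) \<partial>lborel) =
     (\<integral>\<^sup>+(y::'a). ennreal (k2 powr r * \<mu> powr (-(n-2) * r)) * ennreal ((1 + (norm y)\<^sup>2) powr (-(n - 2) * r)) \<partial>lborel)"
    unfolding pt by (simp add: ennreal_mult)
  also have "\<dots> = ennreal (k2 powr r * \<mu> powr (-(n-2) * r)) * (\<integral>\<^sup>+(y::'a). ennreal ((1 + (norm y)\<^sup>2) powr (-(n - 2) * r)) \<partial>lborel)"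
    by (rule nn_integral_cmult) measurable
  also have "ennreal (\<mu> ^ DIM('a)) * (ennreal (k2 powr r * \<mu> powr (-(n-2) * r)) * X) =
      ennreal (k2 powr r * \<mu> powr (n - (n - 2) * r)) * X" for X
  proof -
    have h1: "\<mu> ^ DIM('a) = \<mu> powr n" using mu by (simp add: n_def powr_realpow)
    have h2: "\<mu> powr n * \<mu> powr (-(n-2) * r) = \<mu> powr (n - (n-2) * r)"
    proof -
      have "n + (-(n-2)*r) = n - (n-2) * r" by (simp add: algebra_simps)
      then show ?thesis using powr_add[of \<mu> n "-(n-2)*r"] by metis
    qed
    have eq: "\<mu> ^ DIM('a) * (k2 powr r * \<mu> powr (-(n-2) * r)) = k2 powr r * \<mu> powr (n - (n - 2) * r)"
      unfolding h1 h2[symmetric] by (simp add: mult_ac)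
    show ?thesis
      unfolding eq[symmetric] using mu by (simp add: ennreal_mult mult.assoc)
  qed
  finally show ?thesis unfolding n_def k2_def by simp
qed

lemma bubble_meas[measurable]: "(\<lambda>x. bubble \<mu> \<xi> x) \<in> borel_measurable borel"
  unfolding bubble_def by measurable

lemma tail:
  fixes W :: "'a::euclidean_space \<Rightarrow> real"
  assumes [measurable]: "W \<in> borel_measurable borel" and nn: "\<And>x. W x \<ge> 0" and int: "integrable lborel W"
  shows "(\<lambda>i::nat. \<integral>\<^sup>+x. ennreal (indicator (- ball 0 (real i)) x * W x) \<partial>lborel) \<longlonglongrightarrow> 0"
proof -
  have "(\<lambda>i::nat. \<integral>\<^sup>+x. ennreal (norm ((\<lambda>x. 0) x - indicator (- ball 0 (real i)) x * W x)) \<partial>lborel) \<longlonglongrightarrow> 0"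
  proof (rule nn_integral_dominated_convergence_norm[where w=W])
    show "(\<integral>\<^sup>+ x. ennreal (W x) \<partial>lborel) < \<infinity>"
      using integrableD(2)[OF int] by (simp add: less_top)
    show "AE x in lborel. norm (indicator (- ball 0 (real i)) x * W x) \<le> W x" for i
      using nn by (auto simp: indicator_def)
    show "AE x in lborel. (\<lambda>i::nat. indicator (- ball 0 (real i)) x * W x) \<longlonglongrightarrow> 0"
    proof (rule AE_I2)
      fix x :: 'a
      obtain m :: nat where m: "norm x < real m" using reals_Archimedean2 by blast
      have "eventually (\<lambda>i::nat. indicator (- ball 0 (real i)) x * W x = 0) sequentially"
        unfolding eventually_sequentially
      proof (intro exI allI impI)
        fix i assume "i \<ge> m"
        then have "norm x < real i" using m by linarith
        then show "indicator (- ball 0 (real i)) x * W x = 0" by (simp add: indicator_def)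
      qed
      then show "(\<lambda>i::nat. indicator (- ball 0 (real i)) x * W x) \<longlonglongrightarrow> 0"
        by (rule tendsto_eventually)
    qed
  qed measurable
  moreover have "norm ((\<lambda>x. 0) x - indicator (- ball 0 (real i)) x * W x) = indicator (- ball 0 (real i)) x * W x" for i x
    using nn[of x] by (simp add: indicator_def)
  ultimately show ?thesis by simp
qed

lemma small_exists:
  fixes c e :: real assumes "c \<ge> 0" "e > 0"
  shows "\<exists>d>0. d \<le> 1 \<and> c * d < e"
proof -
  define d where "d = min 1 (e / (c + 1))"
  have d: "d > 0" "d \<le> 1" using assms by (auto simp: d_def)
  have "c * d \<le> c * (e / (c + 1))" using assms by (intro mult_left_mono) (auto simp: d_def)
  also have "\<dots> < e" using assms by (simp add: field_simps)
  finally show ?thesis using d by blast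
qed

lemma powr_choose:
  fixes c e a :: real assumes "c \<ge> 0" "e > 0" "a > 0"
  shows "\<exists>t>0. t powr (-a) * c < e"
proof -
  obtain d where d: "d > 0" "c * d < e" using small_exists[OF assms(1,2)] by blast
  define t where "t = d powr (-1/a)"
  have "t > 0" using d by (simp add: t_def)
  moreover have "t powr (-a) = d" using d assms(3) by (simp add: t_def powr_powr)
  ultimately show ?thesis using d by (metis mult.commute)
qed

lemma ball_bound:
  fixes \<mu> L D n :: real
  assumes mu: "\<mu> > 0" and L: "L > 0" and n: "n > 2" and D1: "D \<ge> \<mu>\<^sup>2" and D2: "D \<ge> L\<^sup>2"
  shows "\<mu> powr (n - 2) * D powr (-(n - 2)) \<le> L powr (-(n - 2))"
proof -
  have D0: "D > 0" using D1 mu by (smt (verit) zero_less_power)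
  have "\<mu> powr (n - 2) = (\<mu>\<^sup>2) powr ((n - 2) / 2)"
  proof -
    have e1: "2 * ((n-2)/2) = n-2" by simp
    show ?thesis by (simp only: sq_powr[OF mu] e1)
  qed
  also have "\<dots> \<le> D powr ((n - 2) / 2)" using D1 n by (intro powr_mono2) auto
  finally have "\<mu> powr (n - 2) * D powr (-(n - 2)) \<le> D powr ((n - 2) / 2) * D powr (-(n - 2))"
    by (intro mult_right_mono) auto
  also have "\<dots> = D powr (-(n - 2) / 2)"
  proof -
    have "(n - 2) / 2 + (-(n - 2)) = -(n - 2) / 2" by (simp add: field_simps)
    then show ?thesis using powr_add[of D "(n - 2) / 2" "-(n - 2)"] by metis
  qed
  also have "\<dots> \<le> (L\<^sup>2) powr (-(n - 2) / 2)" using D2 n L by (intro powr_mono2') auto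
  also have "\<dots> = L powr (-(n - 2))" 
  proof -
    have e2: "2 * (-(n-2)/2) = -(n-2)" by simp
    show ?thesis by (simp only: sq_powr[OF L] e2)
  qed
  finally show ?thesis .
qed

theorem mainTheorem11:
  fixes V :: "'a::euclidean_space \<Rightarrow> real" and s :: real
  assumes "DIM('a) > 4"
    and "continuous_on UNIV V"
    and "\<exists>M. \<forall>x. \<bar>V x\<bar> \<le> M"
    and "1 < s" and "s < real DIM('a) / 2"
    and "integrable lborel (\<lambda>x. \<bar>V x\<bar> powr s)"
  shows "\<forall>\<epsilon>>0. \<exists>R. \<forall>\<mu>>0. \<forall>\<xi>::'a. \<mu> + norm \<xi> > R \<longrightarrow>
           \<bar>integral\<^sup>L lborel (\<lambda>x. V x * (bubble \<mu> \<xi> x)\<^sup>2)\<bar> < \<epsilon>"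
proof (intro allI impI)
  fix \<epsilon> :: real assume eps: "\<epsilon> > 0"
  note N4 = assms(1) and s1 = assms(4) and s2 = assms(5)
  define n where "n = real DIM('a)"
  have n4: "n > 4" using N4 by (simp add: n_def)
  have Vm[measurable]: "V \<in> borel_measurable borel"
    using assms(2) by (rule borel_measurable_continuous_onI)
  obtain M0 where M0: "\<And>x. \<bar>V x\<bar> \<le> M0" using assms(3) by blast
  define M where "M = max M0 1"
  have Mpos: "M > 0" by (simp add: M_def)
  have MV: "\<And>x. \<bar>V x\<bar> \<le> M" using M0 unfolding M_def by (meson max.coboundedI1)
  note M = Mpos MV
  define k2 where "k2 = (kappaN DIM('a))\<^sup>2"
  have k2: "k2 > 0"
  proof -
    have "real DIM('a) * (real DIM('a) - 2) > 0" using N4 by simp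
    then have "kappaN DIM('a) > 0" using N4 by (simp add: kappaN_def)
    then show ?thesis by (simp add: k2_def)
  qed
  define sp where "sp = s / (s - 1)"
  have sp1: "sp > 1" using s1 by (simp add: sp_def field_simps)
  define e where "e = n - (n - 2) * sp"
  have e: "e < 0"
  proof -
    have "n * (s - 1) < (n - 2) * s" using s2 by (simp add: n_def algebra_simps)
    then have "n < (n - 2) * sp" using s1 by (simp add: sp_def field_simps)
    then show ?thesis by (simp add: e_def)
  qed
  define Ir where "Ir = (\<lambda>r. \<integral>\<^sup>+(y::'a). ennreal ((1 + (norm y)\<^sup>2) powr (-(n - 2) * r)) \<partial>lborel)"
  have Ifin: "Ir r < \<infinity>" if "r \<ge> 1" for r
  proof -
    have h: "(n - 2) * r \<ge> n - 2" using mult_left_mono[of 1 r "n-2"] that n4 by simp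
    have "(n - 2) * r > n / 2" using h n4 by linarith
    then have "(n - 2) * r > real DIM('a) / 2" by (simp add: n_def)
    from nD_fin[OF this] have "(\<integral>\<^sup>+(y::'a). ennreal ((1 + (norm y)\<^sup>2) powr (-((n - 2) * r))) \<partial>lborel) < \<infinity>"
      by (simp only: n_def)
    then show ?thesis unfolding Ir_def by (simp only: minus_mult_left)
  qed
  obtain I1 where I1: "I1 \<ge> 0" "Ir 1 = ennreal I1" using Ifin[of 1] by (auto simp: less_top_ennreal)
  obtain Isp where Isp: "Isp \<ge> 0" "Ir sp = ennreal Isp" using Ifin[of sp] sp1 by (auto simp: less_top_ennreal)
  have Zp: "(\<integral>\<^sup>+x. ennreal (((bubble \<mu> \<xi> x)\<^sup>2) powr r) \<partial>lborel) =
      ennreal (k2 powr r * \<mu> powr (n - (n - 2) * r)) * Ir r" if "\<mu> > 0" "r > 0" for \<mu> r and \<xi> :: 'a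
    using Zpow[OF that, of \<xi>] by (simp add: Ir_def k2_def n_def)
  have Zsq: "(bubble \<mu> \<xi> x)\<^sup>2 = k2 * \<mu> powr (n - 2) * (\<mu>\<^sup>2 + (norm (x - \<xi>))\<^sup>2) powr (-(n - 2))"
    if "\<mu> > 0" for \<mu> and \<xi> x :: 'a
    using bubble_sq[OF that] by (simp add: k2_def n_def)
  obtain \<delta> where \<delta>: "\<delta> > 0" "\<delta> \<le> 1" "(M * k2 * I1) * \<delta> < \<epsilon>"
    using small_exists[of "M * k2 * I1" \<epsilon>] M k2 I1 eps by auto
  define B where "B = k2 powr sp * \<delta> powr e * Isp"
  have B: "B \<ge> 0" using Isp by (simp add: B_def)
  obtain t where t: "t > 0" "t powr (-sp) * B < \<epsilon> / 3"
    using powr_choose[OF B _ , of "\<epsilon>/3" sp] eps sp1 by auto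
  define T where "T = (\<lambda>i::nat. \<integral>\<^sup>+x. ennreal (indicator (- ball 0 (real i)) x * \<bar>V x\<bar> powr s) \<partial>lborel)"
  have Tlim: "T \<longlonglongrightarrow> 0"
    unfolding T_def by (rule tail) (use assms(6) in auto)
  have "0 < ennreal (\<epsilon> / 3 / t powr s)" using eps t by simp
  from order_tendstoD(2)[OF Tlim this] obtain \<rho> :: nat where \<rho>: "T \<rho> < ennreal (\<epsilon> / 3 / t powr s)"
    by (auto simp: eventually_sequentially)
  obtain Tr where Tr: "Tr \<ge> 0" "T \<rho> = ennreal Tr"
    using \<rho> by (metis ennreal_less_top less_top_ennreal order.strict_trans)
  have Tr2: "t powr s * Tr < \<epsilon> / 3"
    using \<rho> Tr t eps by (simp add: ennreal_less_iff field_simps)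
  have ballm[measurable]: "ball (0::'a) (real \<rho>) \<in> sets borel" by simp
  have ballp[measurable]: "Measurable.pred borel (\<lambda>x::'a. x \<in> ball (0::'a) (real \<rho>))"
    using ballm unfolding pred_def by simp
  obtain W where W: "W \<ge> 0" "emeasure lborel (ball (0::'a) (real \<rho>)) = ennreal W"
    using emeasure_lborel_ball_finite[of "0::'a" "real \<rho>"] by (auto simp: less_top_ennreal)
  obtain x2 where x2: "x2 > 0" "x2 * (M * k2 * W) < \<epsilon> / 3"
    using small_exists[of "M * k2 * W" "\<epsilon> / 3"] M k2 W eps by (auto simp: mult.commute)
  define L where "L = x2 powr (-1 / (n - 2))"
  have L: "L > 0" "L powr (-(n - 2)) = x2"
  proof -
    show "L > 0" using x2 by (simp add: L_def)
    have ex: "-1 / (n - 2) * -(n - 2) = 1" using n4 by (simp add: field_simps)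
    have "L powr (-(n - 2)) = x2 powr (-1 / (n - 2) * -(n - 2))"
      unfolding L_def by (rule powr_powr)
    also have "\<dots> = x2" using x2 by (simp only: ex powr_one_gt_zero_iff)
    finally show "L powr (-(n - 2)) = x2" .
  qed
  show "\<exists>R. \<forall>\<mu>>0. \<forall>\<xi>::'a. \<mu> + norm \<xi> > R \<longrightarrow>
           \<bar>integral\<^sup>L lborel (\<lambda>x. V x * (bubble \<mu> \<xi> x)\<^sup>2)\<bar> < \<epsilon>"
  proof (intro exI[of _ "real \<rho> + 2 * L"] allI impI)
    fix \<mu> :: real and \<xi> :: 'a
    assume mu: "\<mu> > 0" and R: "\<mu> + norm \<xi> > real \<rho> + 2 * L"
    define Z where "Z = (\<lambda>x. (bubble \<mu> \<xi> x)\<^sup>2)"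
    have Z0: "Z x \<ge> 0" for x by (simp add: Z_def)
    have Zm[measurable]: "Z \<in> borel_measurable borel" unfolding Z_def by measurable
    have K: "(\<integral>\<^sup>+x. ennreal (\<bar>V x\<bar> * Z x) \<partial>lborel) < ennreal \<epsilon>"
    proof (cases "\<mu> \<le> \<delta>")
      case True
      have "(\<integral>\<^sup>+x. ennreal (\<bar>V x\<bar> * Z x) \<partial>lborel) \<le> (\<integral>\<^sup>+x. ennreal M * ennreal ((Z x) powr 1) \<partial>lborel)"
        using M Z0 by (intro nn_integral_mono) (simp add: ennreal_mult[symmetric] mult_right_mono)
      also have "\<dots> = ennreal M * (\<integral>\<^sup>+x. ennreal ((Z x) powr 1) \<partial>lborel)"
        by (rule nn_integral_cmult) measurable
      also have "\<dots> = ennreal M * (ennreal (k2 powr 1 * \<mu> powr (n - (n - 2) * 1)) * ennreal I1)"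
        using Zp[OF mu, of 1 \<xi>] I1 by (simp add: Z_def)
      also have "\<dots> = ennreal (M * k2 * \<mu>\<^sup>2 * I1)"
        using M k2 mu I1 by (simp add: ennreal_mult[symmetric] powr_numeral mult.assoc)
      also have "\<dots> < ennreal \<epsilon>"
      proof -
        have "\<mu> * \<mu> \<le> \<delta> * 1" using True mu \<delta> by (intro mult_mono) auto
        then have "\<mu>\<^sup>2 \<le> \<delta>" by (simp add: power2_eq_square)
        then have "M * k2 * I1 * \<mu>\<^sup>2 \<le> M * k2 * I1 * \<delta>"
          using M k2 I1 by (intro mult_left_mono) auto
        then have "M * k2 * \<mu>\<^sup>2 * I1 < \<epsilon>" using \<delta> by (simp add: algebra_simps)
        then show ?thesis using eps by (intro ennreal_lessI)
      qed
      finally show ?thesis .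
    next
      case False
      then have mud: "\<mu> > \<delta>" by simp
      define a1 where "a1 = M * k2 * x2"
      define a2 where "a2 = t powr s"
      define a3 where "a3 = t powr (-sp)"
      have a: "a1 \<ge> 0" "a2 \<ge> 0" "a3 \<ge> 0" using M k2 x2 by (auto simp: a1_def a2_def a3_def)
      have pt: "ennreal (\<bar>V x\<bar> * Z x) \<le>
         ennreal a1 * indicator (ball (0::'a) (real \<rho>)) x
         + ennreal a2 * ennreal (indicator (- ball (0::'a) (real \<rho>)) x * \<bar>V x\<bar> powr s)
         + ennreal a3 * ennreal ((Z x) powr sp)" for x
      proof (cases "x \<in> ball (0::'a) (real \<rho>)")
        case True
        then have xr: "norm x < real \<rho>" by simp
        define D where "D = \<mu>\<^sup>2 + (norm (x - \<xi>))\<^sup>2"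
        have D1: "D \<ge> \<mu>\<^sup>2" by (simp add: D_def)
        have D2: "D \<ge> L\<^sup>2"
        proof (cases "norm \<xi> \<ge> real \<rho> + L")
          case True
          have "norm (x - \<xi>) \<ge> norm \<xi> - norm x" by (metis norm_minus_commute norm_triangle_ineq2)
          then have "norm (x - \<xi>) \<ge> L" using True xr by linarith
          then have "(norm (x - \<xi>))\<^sup>2 \<ge> L\<^sup>2" using L by (intro power_mono) auto
          moreover have "\<mu>\<^sup>2 \<ge> 0" by simp
          ultimately show ?thesis unfolding D_def by linarith
        next
          case False
          then have "\<mu> \<ge> L" using R by linarith
          then have "\<mu>\<^sup>2 \<ge> L\<^sup>2" using L by (intro power_mono) auto
          then show ?thesis using D1 by linarith
        qed
        have "Z x = k2 * (\<mu> powr (n - 2) * D powr (-(n - 2)))"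
          unfolding Z_def Zsq[OF mu] D_def by simp
        also have "\<dots> \<le> k2 * L powr (-(n - 2))"
          using ball_bound[OF mu L(1) _ D1 D2] n4 k2 by (intro mult_left_mono) auto
        finally have "Z x \<le> k2 * x2" using L by simp
        then have "\<bar>V x\<bar> * Z x \<le> M * (k2 * x2)"
          using M Z0 by (intro mult_mono) auto
        then have "ennreal (\<bar>V x\<bar> * Z x) \<le> ennreal a1 * indicator (ball (0::'a) (real \<rho>)) x"
          using True by (simp add: a1_def mult.assoc ennreal_leI)
        then show ?thesis by (simp add: add_increasing2 order_trans[OF _ add_increasing2])
      next
        case False
        have "\<bar>V x\<bar> * Z x \<le> (t * \<bar>V x\<bar>) powr s + (Z x / t) powr sp"
          unfolding sp_def using young_pt[of "\<bar>V x\<bar>" "Z x" t s] Z0 t s1 by auto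
        also have "\<dots> = a2 * (indicator (- ball (0::'a) (real \<rho>)) x * \<bar>V x\<bar> powr s) + a3 * (Z x) powr sp"
        proof -
          have i1: "indicator (- ball (0::'a) (real \<rho>)) x = (1::real)" using False by (simp add: indicator_def)
          have p1: "(t * \<bar>V x\<bar>) powr s = t powr s * \<bar>V x\<bar> powr s" using t by (simp add: powr_mult)
          have p2: "(Z x / t) powr sp = Z x powr sp / t powr sp" using t Z0[of x] by (simp add: powr_divide)
          have p3: "Z x powr sp / t powr sp = t powr (-sp) * Z x powr sp" by (simp add: powr_minus field_simps)
          show ?thesis unfolding p1 p2 p3 i1 a2_def a3_def by simp
        qed
        finally have "ennreal (\<bar>V x\<bar> * Z x) \<le> ennreal (a2 * (indicator (- ball (0::'a) (real \<rho>)) x * \<bar>V x\<bar> powr s) + a3 * (Z x) powr sp)"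
          by (rule ennreal_leI)
        also have "\<dots> = ennreal (a2 * (indicator (- ball (0::'a) (real \<rho>)) x * \<bar>V x\<bar> powr s)) + ennreal (a3 * (Z x) powr sp)"
          using a by (intro ennreal_plus) auto
        also have "\<dots> = ennreal a2 * ennreal (indicator (- ball (0::'a) (real \<rho>)) x * \<bar>V x\<bar> powr s) + ennreal a3 * ennreal ((Z x) powr sp)"
          using a by (simp add: ennreal_mult)
        finally show ?thesis by (simp add: add.assoc add_increasing)
      qed
      have "(\<integral>\<^sup>+x. ennreal (\<bar>V x\<bar> * Z x) \<partial>lborel) \<le>
         (\<integral>\<^sup>+x. ennreal a1 * indicator (ball (0::'a) (real \<rho>)) x
         + ennreal a2 * ennreal (indicator (- ball (0::'a) (real \<rho>)) x * \<bar>V x\<bar> powr s)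
         + ennreal a3 * ennreal ((Z x) powr sp) \<partial>lborel)"
        by (intro nn_integral_mono pt)
      also have "\<dots> = (\<integral>\<^sup>+x. ennreal a1 * indicator (ball (0::'a) (real \<rho>)) x \<partial>lborel)
         + (\<integral>\<^sup>+x. ennreal a2 * ennreal (indicator (- ball (0::'a) (real \<rho>)) x * \<bar>V x\<bar> powr s) \<partial>lborel)
         + (\<integral>\<^sup>+x. ennreal a3 * ennreal ((Z x) powr sp) \<partial>lborel)"
      proof -
        have "(\<integral>\<^sup>+x. ennreal a1 * indicator (ball (0::'a) (real \<rho>)) x
         + ennreal a2 * ennreal (indicator (- ball (0::'a) (real \<rho>)) x * \<bar>V x\<bar> powr s)
         + ennreal a3 * ennreal ((Z x) powr sp) \<partial>lborel) =
         (\<integral>\<^sup>+x. ennreal a1 * indicator (ball (0::'a) (real \<rho>)) x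
         + ennreal a2 * ennreal (indicator (- ball (0::'a) (real \<rho>)) x * \<bar>V x\<bar> powr s) \<partial>lborel)
         + (\<integral>\<^sup>+x. ennreal a3 * ennreal ((Z x) powr sp) \<partial>lborel)"
          by (rule nn_integral_add; measurable)
        moreover have "(\<integral>\<^sup>+x. ennreal a1 * indicator (ball (0::'a) (real \<rho>)) x
         + ennreal a2 * ennreal (indicator (- ball (0::'a) (real \<rho>)) x * \<bar>V x\<bar> powr s) \<partial>lborel) =
          (\<integral>\<^sup>+x. ennreal a1 * indicator (ball (0::'a) (real \<rho>)) x \<partial>lborel)
         + (\<integral>\<^sup>+x. ennreal a2 * ennreal (indicator (- ball (0::'a) (real \<rho>)) x * \<bar>V x\<bar> powr s) \<partial>lborel)"
          by (rule nn_integral_add; measurable)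
        ultimately show ?thesis by simp
      qed
      also have "\<dots> = ennreal a1 * emeasure lborel (ball (0::'a) (real \<rho>))
         + ennreal a2 * T \<rho> + ennreal a3 * (\<integral>\<^sup>+x. ennreal ((Z x) powr sp) \<partial>lborel)"
        by (simp add: nn_integral_cmult nn_integral_cmult_indicator T_def)
      also have "\<dots> = ennreal (a1 * W + a2 * Tr + a3 * (k2 powr sp * \<mu> powr e * Isp))"
        using Zp[OF mu, of sp \<xi>] sp1 W Tr Isp a k2 mu
        by (simp add: Z_def e_def ennreal_mult[symmetric] ennreal_plus[symmetric] del: ennreal_plus)
      also have "\<dots> < ennreal \<epsilon>"
      proof -
        have "a1 * W < \<epsilon> / 3" using x2 by (simp add: a1_def algebra_simps)
        moreover have "a2 * Tr < \<epsilon> / 3" using Tr2 by (simp add: a2_def)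
        moreover have "a3 * (k2 powr sp * \<mu> powr e * Isp) \<le> a3 * (k2 powr sp * \<delta> powr e * Isp)"
        proof -
          have "\<mu> powr e \<le> \<delta> powr e" using e mud \<delta> by (intro powr_mono2') auto
          then have "k2 powr sp * \<mu> powr e \<le> k2 powr sp * \<delta> powr e" by (intro mult_left_mono) auto
          then have "k2 powr sp * \<mu> powr e * Isp \<le> k2 powr sp * \<delta> powr e * Isp"
            using Isp by (intro mult_right_mono) auto
          then show ?thesis using a by (intro mult_left_mono) auto
        qed
        moreover have "a3 * (k2 powr sp * \<delta> powr e * Isp) < \<epsilon> / 3"
          using t by (simp add: a3_def B_def)
        ultimately have "a1 * W + a2 * Tr + a3 * (k2 powr sp * \<mu> powr e * Isp) < \<epsilon>" by linarith
        moreover have "a1 * W + a2 * Tr + a3 * (k2 powr sp * \<mu> powr e * Isp) \<ge> 0"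
          using a W Tr Isp by simp
        ultimately show ?thesis using eps by (intro ennreal_lessI) auto
      qed
      finally show ?thesis .
    qed
    show "\<bar>integral\<^sup>L lborel (\<lambda>x. V x * (bubble \<mu> \<xi> x)\<^sup>2)\<bar> < \<epsilon>"
    proof (cases "integrable lborel (\<lambda>x. V x * (bubble \<mu> \<xi> x)\<^sup>2)")
      case True
      have "ennreal (norm (integral\<^sup>L lborel (\<lambda>x. V x * (bubble \<mu> \<xi> x)\<^sup>2))) \<le>
          (\<integral>\<^sup>+x. ennreal (norm (V x * (bubble \<mu> \<xi> x)\<^sup>2)) \<partial>lborel)"
        by (rule integral_norm_bound_ennreal[OF True])
      also have "\<dots> = (\<integral>\<^sup>+x. ennreal (\<bar>V x\<bar> * Z x) \<partial>lborel)"
        by (simp add: Z_def abs_mult)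
      also note K
      finally show ?thesis by (simp add: ennreal_less_iff)
    next
      case False
      then show ?thesis using eps by (simp add: not_integrable_integral_eq)
    qed
  qed
qed

end
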